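(* Let $m \ge 3$ and $l_1\le\cdots\le l_m$ be natural numbers. Then $(B(l_1,\ldots,l_m))^2$ is equitably $k$-choosable for every $k \geq m+1$.
   Context: All graphs are finite and simple. For $m,l_1,\ldots,l_m\in\mathbb{N}$ with $l_1\le\cdots\le l_m$, $B(l_1,\ldots,l_m)$ is the graph with vertex set $\{u\}\cup\{v_{i,j}: i\in[m], j\in[l_i]\}$ in which, for each $i\in[m]$, consecutive vertices in the sequence $u, v_{i,1},\ldots,v_{i,l_i}$ are adjacent (and there are no other edges); i.e., a subdivision of $K_{1,m}$ with paths of lengths $l_1,\ldots,l_m$. For a graph $H$, $H^2$ has vertex set $V(H)$ with two vertices adjacent iff their distance in $H$ is 1 or 2. A $k$-assignment $L$ for a graph $G$ assigns to each vertex $v$ a set $L(v)$ of exactly $k$ colors. An equitable $L$-coloring of $G$ is a proper coloring $f$ with $f(v)\in L(v)$ for all $v$ such that no color is used on more than $\lceil |V(G)|/k\rceil$ vertices. $G$ is equitably $k$-choosable if it has an equitable $L$-coloring for every $k$-assignment $L$. *)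

theory Defs
  imports Complex_Main
begin

text \<open>The spider B(l_1,...,l_m): vertex u is (0,0); vertex v_{i,j} is (i,j)
for 1 <= i <= m, 1 <= j <= l i.\<close>

definition spider_verts :: "nat \<Rightarrow> (nat \<Rightarrow> nat) \<Rightarrow> (nat \<times> nat) set" where
  "spider_verts m l = {(0,0)} \<union> {(i,j). 1 \<le> i \<and> i \<le> m \<and> 1 \<le> j \<and> j \<le> l i}"

text \<open>Position j in the sequence u, v_{i,1}, ..., v_{i,l_i}.\<close>
definition spider_pos :: "nat \<Rightarrow> nat \<Rightarrow> nat \<times> nat" where
  "spider_pos i j = (if j = 0 then (0,0) else (i,j))"

definition spider_adj :: "nat \<Rightarrow> (nat \<Rightarrow> nat) \<Rightarrow> nat \<times> nat \<Rightarrow> nat \<times> nat \<Rightarrow> bool" where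
  "spider_adj m l x y = (\<exists>i. 1 \<le> i \<and> i \<le> m \<and> (\<exists>j. j + 1 \<le> l i \<and>
      ((x = spider_pos i j \<and> y = spider_pos i (j+1)) \<or> (y = spider_pos i j \<and> x = spider_pos i (j+1)))))"

definition square_adj :: "'a set \<Rightarrow> ('a \<Rightarrow> 'a \<Rightarrow> bool) \<Rightarrow> 'a \<Rightarrow> 'a \<Rightarrow> bool" where
  "square_adj V adj x y = (x \<in> V \<and> y \<in> V \<and> x \<noteq> y \<and>
      (adj x y \<or> (\<exists>z\<in>V. adj x z \<and> adj z y)))"

definition is_k_assignment :: "'a set \<Rightarrow> nat \<Rightarrow> ('a \<Rightarrow> nat set) \<Rightarrow> bool" where
  "is_k_assignment V k L = (\<forall>v\<in>V. finite (L v) \<and> card (L v) = k)"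

definition equitable_L_coloring ::
    "'a set \<Rightarrow> ('a \<Rightarrow> 'a \<Rightarrow> bool) \<Rightarrow> nat \<Rightarrow> ('a \<Rightarrow> nat set) \<Rightarrow> ('a \<Rightarrow> nat) \<Rightarrow> bool" where
  "equitable_L_coloring V adj k L f =
     ((\<forall>v\<in>V. f v \<in> L v) \<and>
      (\<forall>x\<in>V. \<forall>y\<in>V. adj x y \<longrightarrow> f x \<noteq> f y) \<and>
      (\<forall>c. card {v\<in>V. f v = c} \<le> nat \<lceil>real (card V) / real k\<rceil>))"

definition equitably_choosable :: "'a set \<Rightarrow> ('a \<Rightarrow> 'a \<Rightarrow> bool) \<Rightarrow> nat \<Rightarrow> bool" where
  "equitably_choosable V adj k =
     (\<forall>L. is_k_assignment V k L \<longrightarrow> (\<exists>f. equitable_L_coloring V adj k L f))"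

end

theory Submission
  imports Defs
begin


lemma greedyS:
  fixes R :: "'a \<Rightarrow> 'a \<Rightarrow> bool" and d :: "'a \<Rightarrow> nat"
  assumes "finite S" "S \<inter> W = {}" "finite W"
    and "\<forall>x\<in>S. card {y\<in>S. d x \<le> d y} + d x \<le> k"
    and "\<forall>x\<in>S. card (f ` {w\<in>W. R x w}) \<le> d x"
    and "\<forall>v\<in>S. finite (L v) \<and> card (L v) = k"
  shows "\<exists>g. (\<forall>w\<in>W. g w = f w) \<and> (\<forall>v\<in>S. g v \<in> L v \<and> (\<forall>w\<in>W. R v w \<longrightarrow> g v \<noteq> f w)) \<and> inj_on g S"
  using assms
proof (induction "card S" arbitrary: S)
  case 0
  then have "S = {}" by simp
  then show ?case by (intro exI[of _ f]) auto
next
  case (Suc n)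
  then have ne: "S \<noteq> {}" by auto
  obtain x where x: "x \<in> S" "\<forall>y\<in>S. d x \<le> d y"
  proof -
    have "finite (d ` S)" "d ` S \<noteq> {}" using Suc ne by auto
    then have "Min (d ` S) \<in> d ` S" by (rule Min_in)
    then obtain x where "x \<in> S" "d x = Min (d ` S)" by auto
    moreover have "\<forall>y\<in>S. Min (d ` S) \<le> d y" using \<open>finite (d ` S)\<close> by auto
    ultimately show ?thesis using that by auto
  qed
  let ?S = "S - {x}"
  have c1: "n = card ?S" using Suc x by simp
  have c2: "\<forall>x'\<in>?S. card {y\<in>?S. d x' \<le> d y} + d x' \<le> k"
  proof
    fix x' assume "x' \<in> ?S"
    have "card {y\<in>?S. d x' \<le> d y} \<le> card {y\<in>S. d x' \<le> d y}"
      by (rule card_mono) (use Suc in auto)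
    then show "card {y\<in>?S. d x' \<le> d y} + d x' \<le> k" using Suc \<open>x' \<in> ?S\<close> by fastforce
  qed
  obtain g where g: "\<forall>w\<in>W. g w = f w" "\<forall>v\<in>?S. g v \<in> L v \<and> (\<forall>w\<in>W. R v w \<longrightarrow> g v \<noteq> f w)" "inj_on g ?S"
    using Suc.hyps(1)[OF c1] Suc.prems c2 by auto
  let ?F = "f ` {w\<in>W. R x w} \<union> g ` ?S"
  have "{y\<in>S. d x \<le> d y} = S" using x by auto
  then have kk: "card S + d x \<le> k" using Suc.prems(4) x by force
  have "card ?F \<le> card (f ` {w\<in>W. R x w}) + card (g ` ?S)" by (rule card_Un_le)
  also have "\<dots> \<le> d x + card ?S" using Suc.prems(5) x card_image_le[of ?S g] Suc.prems(1) by fastforce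
  also have "\<dots> < k"
  proof -
    have "card ?S = card S - 1" using Suc.prems(1) x by (simp add: card_Diff_singleton)
    moreover have "card S \<ge> 1" using Suc.prems(1) ne by (simp add: Suc_leI card_gt_0_iff)
    ultimately show ?thesis using kk by linarith
  qed
  finally have lt0: "card ?F < k" .
  have "card (L x) = k" using Suc.prems(6) x by blast
  with lt0 have lt: "card ?F < card (L x)" by simp
  have "\<not> L x \<subseteq> ?F"
  proof
    assume "L x \<subseteq> ?F"
    have "finite ?F" using Suc.prems(1) Suc.prems(3) by simp
    then have "card (L x) \<le> card ?F" using \<open>L x \<subseteq> ?F\<close> card_mono by blast
    then show False using lt by simp
  qed
  then obtain c where c: "c \<in> L x" "c \<notin> ?F" by auto
  have xW: "x \<notin> W" using Suc.prems(2) x by auto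
  show ?case
  proof (intro exI[of _ "g(x := c)"] conjI ballI impI)
    show "\<And>w. w \<in> W \<Longrightarrow> (g(x := c)) w = f w" using g xW by auto
    show "\<And>v. v \<in> S \<Longrightarrow> (g(x := c)) v \<in> L v" using g c by auto
    show "\<And>v w. v \<in> S \<Longrightarrow> w \<in> W \<Longrightarrow> R v w \<Longrightarrow> (g(x := c)) v \<noteq> f w" using g c by auto
    have "inj_on (g(x := c)) (insert x ?S)"
      using g(3) c by (auto simp: inj_on_def)
    then show "inj_on (g(x := c)) S" using x by (simp add: insert_absorb)
  qed
qed



fun sqR :: "nat \<times> nat \<Rightarrow> nat \<times> nat \<Rightarrow> bool" where
  "sqR (a,b) (c,d) = ((a,b) \<noteq> (c,d) \<and> (
     (a = c \<and> 1 \<le> a \<and> 1 \<le> b \<and> 1 \<le> d \<and> (b = d+1 \<or> b = d+2 \<or> d = b+1 \<or> d = b+2)) \<or>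
     (a = 0 \<and> b = 0 \<and> 1 \<le> c \<and> (d = 1 \<or> d = 2)) \<or>
     (c = 0 \<and> d = 0 \<and> 1 \<le> a \<and> (b = 1 \<or> b = 2)) \<or>
     (1 \<le> a \<and> 1 \<le> c \<and> b = 1 \<and> d = 1)))"

lemma sqR_sym: "sqR x y \<Longrightarrow> sqR y x"
  by (cases x; cases y) auto

lemma sqR_irrefl: "\<not> sqR x x"
  by (cases x) auto

definition deg :: "(nat \<times> nat) set \<Rightarrow> nat \<times> nat \<Rightarrow> nat" where
  "deg W x = card {w\<in>W. sqR x w}"

definition valid :: "(nat \<times> nat) set \<Rightarrow> (nat \<times> nat \<Rightarrow> nat set) \<Rightarrow> nat \<Rightarrow> (nat \<times> nat \<Rightarrow> nat) \<Rightarrow> bool" where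
  "valid V L k f \<longleftrightarrow> (\<forall>v\<in>V. f v \<in> L v) \<and> (\<forall>x\<in>V. \<forall>y\<in>V. sqR x y \<longrightarrow> f x \<noteq> f y) \<and>
     (\<forall>c. card {v\<in>V. f v = c} \<le> nat \<lceil>real (card V) / real k\<rceil>)"

lemma ceil_step:
  assumes "k \<le> n" "0 < k"
  shows "nat \<lceil>real (n - k) / real k\<rceil> + 1 = nat \<lceil>real n / real k\<rceil>"
proof -
  have "real (n - k) / real k = real n / real k - 1" using assms by (simp add: of_nat_diff diff_divide_distrib)
  then have e: "\<lceil>real (n - k) / real k\<rceil> = \<lceil>real n / real k\<rceil> - 1" by simp
  have "real n / real k \<ge> 1" using assms by simp
  then have "\<lceil>real n / real k\<rceil> \<ge> 1" by linarith
  then show ?thesis using e by linarith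
qed

lemma extend_step:
  assumes fin: "finite V" and SV: "S \<subseteq> V" and cS: "card S \<le> k" and kp: "0 < k"
    and La: "\<forall>v\<in>V. finite (L v) \<and> card (L v) = k"
    and fW: "\<forall>v\<in>V - S. f v \<in> L v" "\<forall>x\<in>V - S. \<forall>y\<in>V - S. sqR x y \<longrightarrow> f x \<noteq> f y"
    and thr: "\<forall>x\<in>S. card {y\<in>S. deg (V - S) x \<le> deg (V - S) y} + deg (V - S) x \<le> k"
  shows "\<exists>g. (\<forall>v\<in>V. g v \<in> L v) \<and> (\<forall>x\<in>V. \<forall>y\<in>V. sqR x y \<longrightarrow> g x \<noteq> g y) \<and>
     (\<forall>c. card {v\<in>V. g v = c} \<le> card {v\<in>V - S. f v = c} + 1)"
proof -
  have finS: "finite S" using fin SV finite_subset by blast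
  have finW: "finite (V - S)" using fin by simp
  have dg: "\<forall>x\<in>S. card (f ` {w\<in>V - S. sqR x w}) \<le> deg (V - S) x"
    unfolding deg_def using fin by (auto intro!: card_image_le)
  obtain g where g: "\<forall>w\<in>V - S. g w = f w" "\<forall>v\<in>S. g v \<in> L v \<and> (\<forall>w\<in>V - S. sqR v w \<longrightarrow> g v \<noteq> f w)" "inj_on g S"
  proof -
    have "\<exists>g. (\<forall>w\<in>V - S. g w = f w) \<and> (\<forall>v\<in>S. g v \<in> L v \<and> (\<forall>w\<in>V - S. sqR v w \<longrightarrow> g v \<noteq> f w)) \<and> inj_on g S"
      by (rule greedyS[of S "V - S" "deg (V - S)" k f sqR L]) (use finS finW thr dg La SV in auto)
    then show ?thesis using that by blast
  qed
  show ?thesis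
  proof (intro exI[of _ g] conjI ballI allI impI)
    fix v assume "v \<in> V" then show "g v \<in> L v" using g fW by (cases "v \<in> S") auto
  next
    fix x y assume xy: "x \<in> V" "y \<in> V" "sqR x y"
    show "g x \<noteq> g y"
    proof (cases "x \<in> S")
      case True
      show ?thesis
      proof (cases "y \<in> S")
        case True
        have "x \<noteq> y" using xy(3) sqR_irrefl by blast
        then show ?thesis using g(3) \<open>x \<in> S\<close> True by (meson inj_onD)
      next
        case False
        then show ?thesis using g \<open>x \<in> S\<close> xy by auto
      qed
    next
      case False
      show ?thesis
      proof (cases "y \<in> S")
        case True
        have s: "sqR y x" using xy sqR_sym by blast
        have "g y \<noteq> f x" using g(2) True xy(1) False s by blast
        moreover have "g x = f x" using g(1) xy(1) False by blast
        ultimately show ?thesis by simp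
      next
        case False
        then show ?thesis using g fW \<open>x \<notin> S\<close> xy by auto
      qed
    qed
  next
    fix c
    have "{v\<in>V. g v = c} \<subseteq> {v\<in>V - S. f v = c} \<union> {v\<in>S. g v = c}" using g by auto
    then have "card {v\<in>V. g v = c} \<le> card ({v\<in>V - S. f v = c} \<union> {v\<in>S. g v = c})"
      by (intro card_mono) (use fin finS in auto)
    also have "\<dots> \<le> card {v\<in>V - S. f v = c} + card {v\<in>S. g v = c}" by (rule card_Un_le)
    also have "card {v\<in>S. g v = c} \<le> 1"
    proof -
      have fin': "finite {v\<in>S. g v = c}" using finS by simp
      have "card {v\<in>S. g v = c} \<le> Suc 0"
        using g(3) by (subst card_le_Suc0_iff_eq[OF fin']) (auto simp: inj_on_def)
      then show ?thesis by simp
    qed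
    finally show "card {v\<in>V. g v = c} \<le> card {v\<in>V - S. f v = c} + 1" by simp
  qed
qed

lemma base_col:
  assumes "finite V" "card V \<le> k" "0 < k" "\<forall>v\<in>V. finite (L v) \<and> card (L v) = k"
  shows "\<exists>g. valid V L k g"
proof -
  have thr: "\<forall>x\<in>V. card {y\<in>V. deg (V - V) x \<le> deg (V - V) y} + deg (V - V) x \<le> k"
  proof
    fix x assume "x \<in> V"
    have "card {y\<in>V. deg (V - V) x \<le> deg (V - V) y} \<le> card V" by (rule card_mono) (use assms in auto)
    then show "card {y\<in>V. deg (V - V) x \<le> deg (V - V) y} + deg (V - V) x \<le> k"
      using assms by (simp add: deg_def)
  qed
  obtain g where g: "\<forall>v\<in>V. g v \<in> L v" "\<forall>x\<in>V. \<forall>y\<in>V. sqR x y \<longrightarrow> g x \<noteq> g y"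
     "\<forall>c. card {v\<in>V. g v = c} \<le> card {v\<in>V - V. (\<lambda>_. 0::nat) v = c} + 1"
    using extend_step[of V V k L "\<lambda>_. 0"] assms thr by auto
  show ?thesis
  proof (cases "V = {}")
    case True then show ?thesis by (auto simp: valid_def)
  next
    case False
    then have "card V > 0" using assms card_gt_0_iff by blast
    then have "real (card V) / real k > 0" using assms by simp
    then have "nat \<lceil>real (card V) / real k\<rceil> \<ge> 1" by linarith
    then show ?thesis using g unfolding valid_def by (intro exI[of _ g]) (auto intro: order_trans)
  qed
qed

lemma extend_valid:
  assumes fin: "finite V" and SV: "S \<subseteq> V" and cS: "card S = k" and kp: "0 < k"
    and La: "\<forall>v\<in>V. finite (L v) \<and> card (L v) = k"
    and fW: "valid (V - S) L k f"
    and thr: "\<forall>x\<in>S. card {y\<in>S. deg (V - S) x \<le> deg (V - S) y} + deg (V - S) x \<le> k"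
  shows "\<exists>g. valid V L k g"
proof -
  obtain g where g: "\<forall>v\<in>V. g v \<in> L v" "\<forall>x\<in>V. \<forall>y\<in>V. sqR x y \<longrightarrow> g x \<noteq> g y"
     "\<forall>c. card {v\<in>V. g v = c} \<le> card {v\<in>V - S. f v = c} + 1"
    using extend_step[of V S k L f] assms unfolding valid_def by auto
  have cVS: "card (V - S) = card V - k" using cS SV fin by (simp add: card_Diff_subset finite_subset)
  have kV: "k \<le> card V" using cS SV fin card_mono by blast
  have "\<forall>c. card {v\<in>V. g v = c} \<le> nat \<lceil>real (card V) / real k\<rceil>"
  proof
    fix c
    have "card {v\<in>V - S. f v = c} \<le> nat \<lceil>real (card V - k) / real k\<rceil>" using fW cVS unfolding valid_def by simp
    then show "card {v\<in>V. g v = c} \<le> nat \<lceil>real (card V) / real k\<rceil>"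
      using g(3)[rule_format, of c] ceil_step[OF kV kp] by linarith
  qed
  then show ?thesis using g unfolding valid_def by blast
qed



lemma sv_mem: "(a,b) \<in> spider_verts m l \<longleftrightarrow> (a=0 \<and> b=0) \<or> (1\<le>a \<and> a\<le>m \<and> 1\<le>b \<and> b\<le>l a)"
  by (auto simp: spider_verts_def)

lemma sv_eq: "spider_verts m l = insert (0,0) (Sigma {1..m} (\<lambda>i. {1..l i}))"
  by (auto simp: spider_verts_def)

lemma sv_finite: "finite (spider_verts m l)"
  by (simp add: sv_eq)

lemma sv_card: "card (spider_verts m l) = 1 + sum l {1..m}"
proof -
  have "(0,0) \<notin> Sigma {1..m} (\<lambda>i. {1..l i})" by auto
  then show ?thesis by (simp add: sv_eq card_SigmaI)
qed

lemma sv_mono: "(\<And>i. l' i \<le> l i) \<Longrightarrow> spider_verts m l' \<subseteq> spider_verts m l"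
  unfolding spider_verts_def using order_trans by fastforce

lemma adj_sqR: "spider_adj m l x y \<Longrightarrow> sqR x y"
  unfolding spider_adj_def spider_pos_def by (auto split: if_splits)

lemma link: "square_adj V (spider_adj m l) x y \<Longrightarrow> sqR x y"
  unfolding square_adj_def
proof (elim conjE disjE bexE)
  assume "spider_adj m l x y" then show "sqR x y" by (rule adj_sqR)
next
  fix z assume a: "x \<noteq> y" "spider_adj m l x z" "spider_adj m l z y"
  obtain i j where ij: "1 \<le> i" "(x = spider_pos i j \<and> z = spider_pos i (j+1)) \<or> (z = spider_pos i j \<and> x = spider_pos i (j+1))"
    using a(2) unfolding spider_adj_def by blast
  obtain i' j' where ij': "1 \<le> i'" "(z = spider_pos i' j' \<and> y = spider_pos i' (j'+1)) \<or> (y = spider_pos i' j' \<and> z = spider_pos i' (j'+1))"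
    using a(3) unfolding spider_adj_def by blast
  show "sqR x y" using a(1) ij ij' unfolding spider_pos_def by (auto split: if_splits)
qed

lemma takeaway:
  fixes f :: "nat \<Rightarrow> nat"
  assumes "finite I" "r \<le> sum f I"
  shows "\<exists>g. (\<forall>i. g i \<le> f i) \<and> (\<forall>i. i \<notin> I \<longrightarrow> g i = f i) \<and> sum (\<lambda>i. f i - g i) I = r"
  using assms
proof (induction I arbitrary: r rule: finite_induct)
  case empty
  then show ?case by (intro exI[of _ f]) auto
next
  case (insert a F)
  let ?t = "min r (f a)"
  have "r - ?t \<le> sum f F" using insert by auto
  then obtain g0 where g0: "\<forall>i. g0 i \<le> f i" "\<forall>i. i \<notin> F \<longrightarrow> g0 i = f i" "sum (\<lambda>i. f i - g0 i) F = r - ?t"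
    using insert.IH by blast
  let ?g = "g0(a := f a - ?t)"
  have "sum (\<lambda>i. f i - ?g i) F = sum (\<lambda>i. f i - g0 i) F"
    using insert.hyps(2) by (intro sum.cong) auto
  then have "sum (\<lambda>i. f i - ?g i) (insert a F) = ?t + (r - ?t)"
    using insert.hyps g0 by simp
  then show ?case using g0 insert.hyps by (intro exI[of _ ?g]) auto
qed



lemma nb3: "g i < j \<Longrightarrow> 3 \<le> j \<Longrightarrow> {w\<in>spider_verts m g. sqR (i,j) w} \<subseteq> {(i,j-1),(i,j-2)}"
  unfolding spider_verts_def by auto

lemma nb2: "g i < 2 \<Longrightarrow> {w\<in>spider_verts m g. sqR (i,2) w} \<subseteq> {(i,1),(0,0)}"
  unfolding spider_verts_def by auto

lemma nb1: "g i = 0 \<Longrightarrow> {w\<in>spider_verts m g. sqR (i,1) w} \<subseteq> insert (0,0) ((\<lambda>a. (a,1)) ` {a\<in>{1..m}. 1 \<le> g a})"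
  unfolding spider_verts_def by auto

lemma nbp1: "{w\<in>spider_verts m g. sqR (i, g i + 2) w} \<subseteq> {if g i = 0 then (0,0) else (i, g i)}"
  unfolding spider_verts_def by auto

lemma nbp2: "{w\<in>spider_verts m g. sqR (i, g i + 3) w} = {}"
  unfolding spider_verts_def by auto

lemma deg_le2:
  assumes "g i < j" "2 \<le> j"
  shows "deg (spider_verts m g) (i,j) \<le> 2"
proof (cases "j = 2")
  case True
  then have "deg (spider_verts m g) (i,j) \<le> card {(i,1),(0::nat,0::nat)}"
    unfolding deg_def using nb2[of g i m] assms by (intro card_mono) auto
  also have "\<dots> \<le> 2" by (simp add: card_insert_le_m1)
  finally show ?thesis .
next
  case False
  then have "deg (spider_verts m g) (i,j) \<le> card {(i,j-1),(i,j-2)}"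
    unfolding deg_def using nb3[of g i j m] assms by (intro card_mono) auto
  also have "\<dots> \<le> 2" by (simp add: card_insert_le_m1)
  finally show ?thesis .
qed



lemma tail_thr:
  fixes m k :: nat and l g :: "nat \<Rightarrow> nat"
  defines "V \<equiv> spider_verts m l" and "V' \<equiv> spider_verts m g"
  assumes gl: "\<forall>i. g i \<le> l i" and cS: "card (V - V') = k"
    and i0: "1 \<le> i0" "i0 \<le> m" "g i0 + 3 \<le> l i0"
    and legs: "card {i\<in>{1..m}. 1 \<le> l i} < k"
  shows "\<forall>x\<in>V - V'. card {y\<in>V - V'. deg V' x \<le> deg V' y} + deg V' x \<le> k"
proof
  let ?S = "V - V'"
  let ?d = "deg V'"
  have memS: "\<And>i j. (i,j) \<in> ?S \<longleftrightarrow> 1 \<le> i \<and> i \<le> m \<and> g i < j \<and> j \<le> l i"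
    unfolding V_def V'_def spider_verts_def by auto
  have finS: "finite ?S" unfolding V_def by (simp add: sv_finite)
  define p1 where "p1 = (i0, g i0 + 2)"
  define p2 where "p2 = (i0, g i0 + 3)"
  have p1S: "p1 \<in> ?S" and p2S: "p2 \<in> ?S" using i0 memS unfolding p1_def p2_def by auto
  have dp2: "?d p2 = 0" unfolding deg_def p2_def V'_def nbp2 by simp
  have dp1: "?d p1 \<le> 1"
  proof -
    have "?d p1 \<le> card {if g i0 = 0 then (0::nat,0::nat) else (i0, g i0)}"
      unfolding deg_def p1_def V'_def by (intro card_mono) (use nbp1 in auto)
    then show ?thesis by simp
  qed
  fix x assume xS: "x \<in> ?S"
  obtain i j where x: "x = (i,j)" by (cases x)
  have ij: "1 \<le> i" "i \<le> m" "g i < j" "j \<le> l i" using xS memS x by auto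
  show "card {y\<in>?S. ?d x \<le> ?d y} + ?d x \<le> k"
  proof (cases "?d x \<le> 2")
    case True
    consider "?d x = 0" | "?d x = 1" | "?d x = 2" using True by linarith
    then show ?thesis
    proof cases
      case 1
      have "card {y\<in>?S. ?d x \<le> ?d y} \<le> card ?S" using finS by (intro card_mono) auto
      then show ?thesis using 1 cS by simp
    next
      case 2
      have "card {y\<in>?S. ?d x \<le> ?d y} \<le> card (?S - {p2})" using finS dp2 2 by (intro card_mono) auto
      also have "\<dots> = k - 1" using p2S cS finS by (simp add: card_Diff_singleton)
      finally have "card {y\<in>?S. ?d x \<le> ?d y} \<le> k - 1" .
      moreover have "0 < card ?S" using p2S finS card_gt_0_iff by blast
      ultimately show ?thesis using 2 cS by linarith
    next
      case 3
      have "card {y\<in>?S. ?d x \<le> ?d y} \<le> card (?S - {p1, p2})" using finS dp2 dp1 3 by (intro card_mono) auto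
      also have "\<dots> = k - 2"
      proof -
        have "p1 \<noteq> p2" unfolding p1_def p2_def by simp
        then have "card (?S - {p1,p2}) = card ?S - card {p1,p2}" using p1S p2S finS by (intro card_Diff_subset) auto
        then show ?thesis using cS \<open>p1 \<noteq> p2\<close> by simp
      qed
      finally have "card {y\<in>?S. ?d x \<le> ?d y} \<le> k - 2" .
      moreover have "2 \<le> k"
      proof -
        have "p1 \<noteq> p2" unfolding p1_def p2_def by simp
        then have "card {p1,p2} = 2" by simp
        moreover have "card {p1,p2} \<le> card ?S" using p1S p2S finS by (intro card_mono) auto
        ultimately show ?thesis using cS by simp
      qed
      ultimately show ?thesis using 3 by linarith
    qed
  next
    case False
    have j1: "j = 1"
    proof (rule ccontr)
      assume "j \<noteq> 1"
      then have "2 \<le> j" using ij by linarith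
      then have "?d x \<le> 2" using deg_le2[of g i j m] ij x unfolding V'_def by simp
      then show False using False by simp
    qed
    have gi: "g i = 0" using ij j1 by simp
    define A where "A = {a\<in>{1..m}. 1 \<le> l a \<and> g a = 0}"
    define B where "B = {a\<in>{1..m}. 1 \<le> g a}"
    have "?d x \<le> card (insert (0,0) ((\<lambda>a. (a,1::nat)) ` B))"
      unfolding deg_def x j1 V'_def B_def by (intro card_mono) (use nb1[of g i m, OF gi] in auto)
    also have "\<dots> \<le> 1 + card B"
    proof -
      have fB: "finite ((\<lambda>a. (a,1::nat)) ` B)" by (simp add: B_def)
      have "card (insert (0,0) ((\<lambda>a. (a,1::nat)) ` B)) \<le> Suc (card ((\<lambda>a. (a,1::nat)) ` B))"
        using fB by (simp add: card_insert_if)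
      moreover have "card ((\<lambda>a. (a,1::nat)) ` B) \<le> card B" by (rule card_image_le) (simp add: B_def)
      ultimately show ?thesis by simp
    qed
    finally have dx: "?d x \<le> 1 + card B" .
    have sub: "{y\<in>?S. ?d x \<le> ?d y} \<subseteq> (\<lambda>a. (a,1::nat)) ` A"
    proof
      fix y assume y: "y \<in> {y\<in>?S. ?d x \<le> ?d y}"
      obtain a b where yab: "y = (a,b)" by (cases y)
      have ab: "1 \<le> a" "a \<le> m" "g a < b" "b \<le> l a" using y memS yab by auto
      have "b = 1"
      proof (rule ccontr)
        assume "b \<noteq> 1"
        then have "2 \<le> b" using ab by linarith
        then have "?d y \<le> 2" using deg_le2[of g a b m] ab yab unfolding V'_def by simp
        then show False using False y by simp
      qed
      then show "y \<in> (\<lambda>a. (a,1::nat)) ` A" using ab yab unfolding A_def by auto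
    qed
    have "card {y\<in>?S. ?d x \<le> ?d y} \<le> card ((\<lambda>a. (a,1::nat)) ` A)" using sub by (intro card_mono) (auto simp: A_def)
    also have "\<dots> \<le> card A" by (rule card_image_le) (simp add: A_def)
    finally have cA: "card {y\<in>?S. ?d x \<le> ?d y} \<le> card A" .
    have "card A + card B = card (A \<union> B)"
      by (rule card_Un_disjoint[symmetric]) (auto simp: A_def B_def)
    also have "\<dots> \<le> card {i\<in>{1..m}. 1 \<le> l i}"
      using gl by (intro card_mono) (auto simp: A_def B_def intro: order_trans)
    finally show ?thesis using legs cA dx by linarith
  qed
qed



lemma deg_le_card: "finite W \<Longrightarrow> deg W x \<le> card W"
  unfolding deg_def by (intro card_mono) auto

lemma small_V:
  assumes "\<forall>i\<in>{1..m}. l i \<le> 2"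
  shows "spider_verts m l = insert (0,0) ((\<lambda>i. (i,1::nat)) ` {i\<in>{1..m}. 1 \<le> l i} \<union> (\<lambda>i. (i,2::nat)) ` {i\<in>{1..m}. l i = 2})"
proof -
  have "\<And>a b. (a,b) \<in> spider_verts m l \<Longrightarrow> (a,b) \<in> insert (0,0) ((\<lambda>i. (i,1::nat)) ` {i\<in>{1..m}. 1 \<le> l i} \<union> (\<lambda>i. (i,2::nat)) ` {i\<in>{1..m}. l i = 2})"
  proof -
    fix a b assume "(a,b) \<in> spider_verts m l"
    then have h: "(a=0 \<and> b=0) \<or> (1\<le>a \<and> a\<le>m \<and> 1\<le>b \<and> b\<le>l a)" by (simp add: sv_mem)
    show "?thesis a b"
    proof (cases "a=0 \<and> b=0")
      case True then show ?thesis by simp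
    next
      case False
      then have h2: "1\<le>a" "a\<le>m" "1\<le>b" "b\<le>l a" using h by auto
      then have "l a \<le> 2" using assms by auto
      then have "b = 1 \<or> b = 2" using h2 by linarith
      then show ?thesis
      proof
        assume "b = 1"
        then have "(a,b) \<in> (\<lambda>i. (i,1::nat)) ` {i\<in>{1..m}. 1 \<le> l i}" using h2 by auto
        then show ?thesis by blast
      next
        assume "b = 2"
        then have "(a,b) \<in> (\<lambda>i. (i,2::nat)) ` {i\<in>{1..m}. l i = 2}" using h2 \<open>l a \<le> 2\<close> by auto
        then show ?thesis by blast
      qed
    qed
  qed
  moreover have "insert (0,0) ((\<lambda>i. (i,1::nat)) ` {i\<in>{1..m}. 1 \<le> l i} \<union> (\<lambda>i. (i,2::nat)) ` {i\<in>{1..m}. l i = 2}) \<subseteq> spider_verts m l"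
    by (auto simp: sv_mem)
  ultimately show ?thesis by auto
qed

lemma small1:
  fixes m k :: nat and l :: "nat \<Rightarrow> nat"
  defines "V \<equiv> spider_verts m l" and "B1 \<equiv> {i\<in>{1..m}. 1 \<le> l i}" and "B2 \<equiv> {i\<in>{1..m}. l i = 2}"
  assumes le2: "\<forall>i\<in>{1..m}. l i \<le> 2" and big: "k < card V" and c2: "card V + 2 \<le> 2*k"
    and legs: "card B1 < k"
  shows "\<exists>S\<subseteq>V. card S = k \<and> (\<forall>x\<in>S. card {y\<in>S. deg (V - S) x \<le> deg (V - S) y} + deg (V - S) x \<le> k)"
proof -
  let ?P1 = "(\<lambda>i. (i,1::nat)) ` B1"
  let ?P2 = "(\<lambda>i. (i,2::nat)) ` B2"
  have Veq: "V = insert (0,0) (?P1 \<union> ?P2)" unfolding V_def B1_def B2_def by (rule small_V[OF le2])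
  have fB1: "finite B1" and fB2: "finite B2" by (auto simp: B1_def B2_def)
  have cP1: "card ?P1 = card B1" by (rule card_image) (auto simp: inj_on_def)
  have cP2: "card ?P2 = card B2" by (rule card_image) (auto simp: inj_on_def)
  have disj: "?P1 \<inter> ?P2 = {}" by auto
  have cV: "card V = 1 + card B1 + card B2"
  proof -
    have "(0,0) \<notin> ?P1 \<union> ?P2" by (auto simp: B1_def B2_def)
    then have "card V = Suc (card (?P1 \<union> ?P2))" using Veq fB1 fB2 by simp
    also have "card (?P1 \<union> ?P2) = card ?P1 + card ?P2" using disj fB1 fB2 by (intro card_Un_disjoint) auto
    finally show ?thesis using cP1 cP2 by simp
  qed
  have "k - 1 - card B1 \<le> card ?P2" using cV big cP2 by linarith
  then obtain X where X: "X \<subseteq> ?P2" "card X = k - 1 - card B1" "finite X"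
    by (rule obtain_subset_with_card_n)
  define S where "S = insert (0,0) (?P1 \<union> X)"
  have SV: "S \<subseteq> V" using X Veq unfolding S_def by auto
  have cS: "card S = k"
  proof -
    have "(0,0) \<notin> ?P1 \<union> X" using X by (auto simp: B1_def B2_def)
    then have "card S = Suc (card (?P1 \<union> X))" using X fB1 unfolding S_def by simp
    also have "card (?P1 \<union> X) = card ?P1 + card X" using disj X fB1 by (intro card_Un_disjoint) auto
    finally show ?thesis using cP1 X legs by simp
  qed
  define W where "W = V - S"
  have Weq: "W = ?P2 - X" unfolding W_def S_def Veq using disj X by (auto simp: B1_def B2_def)
  have fW: "finite W" unfolding Weq using fB2 by simp
  have cW: "card W + 2 \<le> k"
  proof -
    have "card W = card V - card S" unfolding W_def using SV Veq fB1 fB2 by (simp add: card_Diff_subset finite_subset)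
    then show ?thesis using cS c2 big by linarith
  qed
  let ?f = "\<lambda>w. (fst w, 1::nat)"
  have D0: "\<And>y. y \<in> S \<Longrightarrow> y \<noteq> (0,0) \<Longrightarrow> deg W y \<le> 1 \<and> (1 \<le> deg W y \<longrightarrow> y \<in> ?f ` W)"
  proof -
    fix y assume yS: "y \<in> S" "y \<noteq> (0,0)"
    then have "y \<in> ?P1 \<or> y \<in> X" unfolding S_def by auto
    then show "deg W y \<le> 1 \<and> (1 \<le> deg W y \<longrightarrow> y \<in> ?f ` W)"
    proof
      assume "y \<in> ?P1"
      then obtain i where yi: "y = (i,1)" by auto
      have sub: "{w\<in>W. sqR y w} \<subseteq> {(i,2)}" unfolding Weq yi by auto
      have "deg W y \<le> card {(i,2::nat)}" unfolding deg_def by (rule card_mono) (use sub in auto)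
      moreover have "1 \<le> deg W y \<Longrightarrow> y \<in> ?f ` W"
      proof -
        assume "1 \<le> deg W y"
        then have "{w\<in>W. sqR y w} \<noteq> {}" unfolding deg_def by (metis card.empty not_one_le_zero)
        then have "(i,2) \<in> W" using sub by auto
        then show "y \<in> ?f ` W" unfolding yi by (auto intro: image_eqI[where x="(i,2)"])
      qed
      ultimately show ?thesis by simp
    next
      assume "y \<in> X"
      then obtain i where yi: "y = (i,2)" using X by auto
      have e: "{w\<in>W. sqR y w} = {}" unfolding Weq yi by auto
      have "deg W y = 0" unfolding deg_def e by simp
      then show ?thesis by simp
    qed
  qed
  have finS: "finite S" using SV Veq fB1 fB2 finite_subset by auto
  have thr: "\<forall>x\<in>S. card {y\<in>S. deg W x \<le> deg W y} + deg W x \<le> k"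
  proof
    fix x assume xS: "x \<in> S"
    consider "deg W x = 0" | "deg W x = 1" | "2 \<le> deg W x" by linarith
    then show "card {y\<in>S. deg W x \<le> deg W y} + deg W x \<le> k"
    proof cases
      case 1
      have "card {y\<in>S. deg W x \<le> deg W y} \<le> card S" using finS by (intro card_mono) auto
      then show ?thesis using 1 cS by simp
    next
      case 2
      have "{y\<in>S. deg W x \<le> deg W y} \<subseteq> insert (0,0) (?f ` W)"
      proof
        fix y assume y: "y \<in> {y\<in>S. deg W x \<le> deg W y}"
        then have y1: "1 \<le> deg W y" "y \<in> S" using 2 by auto
        show "y \<in> insert (0,0) (?f ` W)"
        proof (cases "y = (0,0)")
          case False then show ?thesis using D0[OF y1(2) False] y1(1) by blast
        qed simp
      qed
      then have "card {y\<in>S. deg W x \<le> deg W y} \<le> card (insert (0,0) (?f ` W))" using fW by (intro card_mono) auto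
      also have "\<dots> \<le> Suc (card (?f ` W))" using fW by (simp add: card_insert_if)
      also have "\<dots> \<le> Suc (card W)" using card_image_le[OF fW, of ?f] by simp
      finally show ?thesis using 2 cW by simp
    next
      case 3
      have sub: "{y\<in>S. deg W x \<le> deg W y} \<subseteq> {(0,0)}"
      proof
        fix y assume y: "y \<in> {y\<in>S. deg W x \<le> deg W y}"
        show "y \<in> {(0,0)}"
        proof (rule ccontr)
          assume "y \<notin> {(0,0)}"
          then have "deg W y \<le> 1" using D0 y by blast
          then show False using y 3 by simp
        qed
      qed
      have "card {y\<in>S. deg W x \<le> deg W y} \<le> card {(0::nat,0::nat)}" by (rule card_mono) (use sub in simp_all)
      then have "card {y\<in>S. deg W x \<le> deg W y} \<le> 1" by simp
      moreover have "deg W x \<le> card W" using fW by (rule deg_le_card)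
      ultimately show ?thesis using cW by simp
    qed
  qed
  have "S \<subseteq> V \<and> card S = k \<and> (\<forall>x\<in>S. card {y\<in>S. deg (V - S) x \<le> deg (V - S) y} + deg (V - S) x \<le> k)"
    using SV cS thr unfolding W_def by simp
  then show ?thesis by (rule exI[of _ S])
qed



lemma card_le1_sub: "A \<subseteq> {a} \<Longrightarrow> card A \<le> 1"
  by (metis card.empty card_mono finite.emptyI finite_insert is_singletonI is_singleton_altdef
      subset_singletonD zero_le_one order_refl)

lemma small2:
  fixes m k :: nat and l :: "nat \<Rightarrow> nat"
  defines "V \<equiv> spider_verts m l" and "B1 \<equiv> {i\<in>{1..m}. 1 \<le> l i}" and "B2 \<equiv> {i\<in>{1..m}. l i = 2}"
  assumes k4: "4 \<le> k" and le2: "\<forall>i\<in>{1..m}. l i \<le> 2" and cV2: "card V + 1 = 2*k"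
    and legs: "card B1 < k"
  shows "\<exists>S\<subseteq>V. card S = k \<and> (\<forall>x\<in>S. card {y\<in>S. deg (V - S) x \<le> deg (V - S) y} + deg (V - S) x \<le> k)"
proof -
  let ?P1 = "(\<lambda>i. (i,1::nat)) ` B1"
  let ?P2 = "(\<lambda>i. (i,2::nat)) ` B2"
  have Veq: "V = insert (0,0) (?P1 \<union> ?P2)" unfolding V_def B1_def B2_def by (rule small_V[OF le2])
  have fB1: "finite B1" and fB2: "finite B2" by (auto simp: B1_def B2_def)
  have finV: "finite V" unfolding V_def by (rule sv_finite)
  have cP1: "card ?P1 = card B1" by (rule card_image) (auto simp: inj_on_def)
  have cP2: "card ?P2 = card B2" by (rule card_image) (auto simp: inj_on_def)
  have disj: "?P1 \<inter> ?P2 = {}" by auto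
  have cV: "card V = 1 + card B1 + card B2"
  proof -
    have "(0,0) \<notin> ?P1 \<union> ?P2" by (auto simp: B1_def B2_def)
    then have "card V = Suc (card (?P1 \<union> ?P2))" using Veq fB1 fB2 by simp
    also have "card (?P1 \<union> ?P2) = card ?P1 + card ?P2" using disj fB1 fB2 by (intro card_Un_disjoint) auto
    finally show ?thesis using cP1 cP2 by simp
  qed
  have B21: "B2 \<subseteq> B1" by (auto simp: B1_def B2_def)
  have "card B2 \<le> card B1" using fB1 B21 by (rule card_mono)
  then have cB1: "card B1 = k - 1" and cB2: "card B2 = card B1" using cV cV2 legs by linarith+
  have B12: "B2 = B1" using card_subset_eq[OF fB1 B21] cB2 by simp
  have "B1 \<noteq> {}" using cB1 k4 by auto
  then obtain i1 where i1: "i1 \<in> B1" by blast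
  have "card (B1 - {i1}) = k - 2" using i1 fB1 cB1 by (simp add: card_Diff_singleton)
  then have "B1 - {i1} \<noteq> {}"
  proof (intro notI)
    assume c: "card (B1 - {i1}) = k - 2" and e: "B1 - {i1} = {}"
    have "card (B1 - {i1}) = 0" unfolding e by simp
    with c k4 show False by linarith
  qed
  then obtain i2 where i2: "i2 \<in> B1" "i2 \<noteq> i1" by blast
  have cB1i: "card (B1 - {i1}) = k - 2" using i1 fB1 cB1 by (simp add: card_Diff_singleton)
  define W where "W = insert (i2,2) ((\<lambda>i. (i,1::nat)) ` (B1 - {i1}))"
  have WV: "W \<subseteq> V" unfolding W_def Veq using i2 B12 by auto
  have fW: "finite W" unfolding W_def using fB1 by simp
  have cW: "card W = k - 1"
  proof -
    have "(i2,2) \<notin> (\<lambda>i. (i,1::nat)) ` (B1 - {i1})" by auto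
    then have "card W = Suc (card ((\<lambda>i. (i,1::nat)) ` (B1 - {i1})))" unfolding W_def using fB1 by simp
    also have "card ((\<lambda>i. (i,1::nat)) ` (B1 - {i1})) = card (B1 - {i1})" by (rule card_image) (auto simp: inj_on_def)
    finally show ?thesis using cB1i k4 by simp
  qed
  define S where "S = V - W"
  have SV: "S \<subseteq> V" unfolding S_def by auto
  have VS: "V - S = W" unfolding S_def using WV by auto
  have finS: "finite S" using SV finV finite_subset by blast
  have cS: "card S = k" unfolding S_def using WV fW cW cV2 by (simp add: card_Diff_subset)
  have cls: "\<And>y. y \<in> S \<Longrightarrow> y = (0,0) \<or> y = (i1,1) \<or> (\<exists>i. y = (i,2) \<and> i \<noteq> i2)"
  proof -
    fix y assume "y \<in> S"
    then have "y \<in> V" "y \<notin> W" unfolding S_def by auto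
    then show "y = (0,0) \<or> y = (i1,1) \<or> (\<exists>i. y = (i,2) \<and> i \<noteq> i2)"
      unfolding Veq W_def by auto
  qed
  have p0: "(0,0) \<in> S" unfolding S_def W_def Veq by auto
  have p1: "(i1,1) \<in> S" unfolding S_def W_def Veq using i1 by auto
  have p2: "(i1,2) \<in> S" unfolding S_def W_def Veq using i1 i2 B12 by auto
  have d0: "deg W (0,0) \<le> k - 1" using deg_le_card[OF fW] cW by simp
  have d1: "deg W (i1,1) \<le> k - 2"
  proof -
    have "deg W (i1,1) \<le> card ((\<lambda>i. (i,1::nat)) ` (B1 - {i1}))"
      unfolding deg_def W_def by (intro card_mono) (use i2 in \<open>auto simp: fB1\<close>)
    also have "\<dots> \<le> card (B1 - {i1})" by (rule card_image_le) (simp add: fB1)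
    finally show ?thesis using cB1i by simp
  qed
  have d2: "\<And>i. i \<noteq> i2 \<Longrightarrow> deg W (i,2) \<le> 1"
  proof -
    fix i :: nat assume "i \<noteq> i2"
    have "{w\<in>W. sqR (i,2) w} \<subseteq> {(i,1)}" unfolding W_def by auto
    then show "deg W (i,2) \<le> 1" unfolding deg_def by (rule card_le1_sub)
  qed
  have d3: "deg W (i1,2) = 0"
  proof -
    have e: "{w\<in>W. sqR (i1,2) w} = {}" unfolding W_def by auto
    show ?thesis unfolding deg_def e by simp
  qed
  have thr: "\<forall>x\<in>S. card {y\<in>S. deg W x \<le> deg W y} + deg W x \<le> k"
  proof
    fix x assume xS: "x \<in> S"
    consider "deg W x = 0" | "deg W x = 1" | "2 \<le> deg W x" by linarith
    then show "card {y\<in>S. deg W x \<le> deg W y} + deg W x \<le> k"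
    proof cases
      case 1
      have "card {y\<in>S. deg W x \<le> deg W y} \<le> card S" using finS by (intro card_mono) auto
      then show ?thesis using 1 cS by simp
    next
      case 2
      have "card {y\<in>S. deg W x \<le> deg W y} \<le> card (S - {(i1,2)})" using finS d3 2 by (intro card_mono) auto
      also have "\<dots> = k - 1" using p2 cS finS by (simp add: card_Diff_singleton)
      finally show ?thesis using 2 k4 by simp
    next
      case 3
      have big: "\<And>y. y \<in> S \<Longrightarrow> 2 \<le> deg W y \<Longrightarrow> y = (0,0) \<or> y = (i1,1)"
      proof -
        fix y assume y: "y \<in> S" "2 \<le> deg W y"
        show "y = (0,0) \<or> y = (i1,1)"
        proof (rule ccontr)
          assume "\<not> (y = (0,0) \<or> y = (i1,1))"
          then obtain i where "y = (i,2)" "i \<noteq> i2" using cls[OF y(1)] by blast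
          then have "deg W y \<le> 1" using d2 by simp
          then show False using y by simp
        qed
      qed
      show ?thesis
      proof (cases "deg W x \<le> k - 2")
        case True
        have "{y\<in>S. deg W x \<le> deg W y} \<subseteq> {(0,0),(i1,1)}" using big 3 by fastforce
        then have "card {y\<in>S. deg W x \<le> deg W y} \<le> card {(0::nat,0::nat),(i1,1)}" by (intro card_mono) auto
        also have "\<dots> \<le> 2" by (simp add: card_insert_le_m1)
        finally show ?thesis using True k4 by linarith
      next
        case False
        have x0: "x = (0,0)" using big[OF xS] 3 False d1 by force
        have "{y\<in>S. deg W x \<le> deg W y} \<subseteq> {(0,0)}"
        proof
          fix y assume y: "y \<in> {y\<in>S. deg W x \<le> deg W y}"
          then have "2 \<le> deg W y" using 3 by simp
          then have "y = (0,0) \<or> y = (i1,1)" using big y by blast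
          moreover have "y \<noteq> (i1,1)" using y False d1 by auto
          ultimately show "y \<in> {(0,0)}" by simp
        qed
        then have "card {y\<in>S. deg W x \<le> deg W y} \<le> 1" by (rule card_le1_sub)
        then show ?thesis using d0 x0 k4 by simp
      qed
    qed
  qed
  have "S \<subseteq> V \<and> card S = k \<and> (\<forall>x\<in>S. card {y\<in>S. deg (V - S) x \<le> deg (V - S) y} + deg (V - S) x \<le> k)"
    using SV cS thr unfolding VS by simp
  then show ?thesis by (rule exI[of _ S])
qed



lemma tail_construct:
  fixes l :: "nat \<Rightarrow> nat"
  assumes k4: "4 \<le> k" and i0: "1 \<le> i0" "i0 \<le> m" "3 \<le> l i0" and big: "k < 1 + sum l {1..m}"
  shows "\<exists>g. (\<forall>i. g i \<le> l i) \<and> sum (\<lambda>i. l i - g i) {1..m} = k \<and> g i0 + 3 \<le> l i0"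
proof -
  define t where "t = min (l i0) k"
  define l1 where "l1 = l(i0 := l i0 - t)"
  define I where "I = {1..m} - {i0}"
  have i0m: "i0 \<in> {1..m}" using i0 by simp
  have fI: "finite I" by (simp add: I_def)
  have s1: "sum l1 I = sum l I" by (rule sum.cong) (auto simp: l1_def I_def)
  have s2: "sum l {1..m} = l i0 + sum l I" unfolding I_def using i0m by (simp add: sum.remove)
  have "k - t \<le> sum l1 I" using s1 s2 big unfolding t_def by (cases "k \<le> l i0") auto
  then obtain g where g: "\<forall>i. g i \<le> l1 i" "\<forall>i. i \<notin> I \<longrightarrow> g i = l1 i" "sum (\<lambda>i. l1 i - g i) I = k - t"
    using takeaway[OF fI] by blast
  have gi0: "g i0 = l i0 - t" using g(2) by (simp add: I_def l1_def)
  have gl: "\<forall>i. g i \<le> l i" using g(1) unfolding l1_def by (metis diff_le_self fun_upd_apply order_trans)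
  have t3: "3 \<le> t" using i0 k4 unfolding t_def by simp
  have tl: "t \<le> l i0" "t \<le> k" unfolding t_def by auto
  have "sum (\<lambda>i. l i - g i) {1..m} = (l i0 - g i0) + sum (\<lambda>i. l i - g i) I"
    unfolding I_def using i0m by (simp add: sum.remove)
  also have "sum (\<lambda>i. l i - g i) I = sum (\<lambda>i. l1 i - g i) I" by (rule sum.cong) (auto simp: l1_def I_def)
  finally have "sum (\<lambda>i. l i - g i) {1..m} = k" using g(3) gi0 tl by simp
  moreover have "g i0 + 3 \<le> l i0" using gi0 t3 tl by simp
  ultimately show ?thesis using gl by blast
qed

lemma main:
  fixes k m :: nat and L :: "nat \<times> nat \<Rightarrow> nat set"
  assumes k4: "4 \<le> k"
  shows "sum l {1..m} = n \<Longrightarrow> card {i\<in>{1..m}. 1 \<le> l i} < k \<Longrightarrow>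
    (\<forall>v\<in>spider_verts m l. finite (L v) \<and> card (L v) = k) \<Longrightarrow> \<exists>f. valid (spider_verts m l) L k f"
proof (induction n arbitrary: l rule: less_induct)
  case (less n l)
  define V where "V = spider_verts m l"
  have finV: "finite V" unfolding V_def by (rule sv_finite)
  have cV: "card V = 1 + sum l {1..m}" unfolding V_def by (rule sv_card)
  have kp: "0 < k" using k4 by simp
  have La: "\<forall>v\<in>V. finite (L v) \<and> card (L v) = k" using less.prems(3) unfolding V_def .
  show ?case
  proof (cases "card V \<le> k")
    case True
    show ?thesis using base_col[OF finV True kp La] unfolding V_def .
  next
    case False
    then have big: "k < card V" by simp
    show ?thesis
    proof (cases "\<exists>i0. 1 \<le> i0 \<and> i0 \<le> m \<and> 3 \<le> l i0")
      case True
      then obtain i0 where i0: "1 \<le> i0" "i0 \<le> m" "3 \<le> l i0" by blast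
      obtain g where g: "\<forall>i. g i \<le> l i" "sum (\<lambda>i. l i - g i) {1..m} = k" "g i0 + 3 \<le> l i0"
        using tail_construct[of k i0 m l, OF k4 i0] big cV by auto
      define V' where "V' = spider_verts m g"
      have V'V: "V' \<subseteq> V" unfolding V'_def V_def using g(1) by (intro sv_mono) auto
      have sg: "sum l {1..m} = sum g {1..m} + k"
        using g(1,2) sum_subtractf_nat[of "{1..m}" g l] sum_mono[of "{1..m}" g l] by force
      have cS: "card (V - V') = k"
        using V'V finV sg cV sv_card[of m g] by (simp add: card_Diff_subset finite_subset V'_def)
      have legsl: "card {i\<in>{1..m}. 1 \<le> l i} < k" by (rule less.prems(2))
      have thr: "\<forall>x\<in>V - V'. card {y\<in>V - V'. deg V' x \<le> deg V' y} + deg V' x \<le> k"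
        using tail_thr[of g l m k i0] g i0 cS legsl unfolding V_def V'_def by blast
      have legsg: "card {i\<in>{1..m}. 1 \<le> g i} < k"
      proof -
        have "card {i\<in>{1..m}. 1 \<le> g i} \<le> card {i\<in>{1..m}. 1 \<le> l i}"
          using g(1) by (intro card_mono) (auto intro: order_trans)
        then show ?thesis using legsl by simp
      qed
      have "sum g {1..m} < n" using sg less.prems(1) k4 by simp
      then obtain f where f: "valid V' L k f"
        using less.IH[of "sum g {1..m}" g] legsg La V'V unfolding V'_def by blast
      have eq: "V - (V - V') = V'" using V'V by auto
      show ?thesis using extend_valid[of V "V - V'" k L f] finV cS kp La f thr eq unfolding V_def by auto
    next
      case False
      then have le2: "\<forall>i\<in>{1..m}. l i \<le> 2" by auto
      define B1 where "B1 = {i\<in>{1..m}. 1 \<le> l i}"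
      have "sum l {1..m} = sum l B1"
        unfolding B1_def by (rule sum.mono_neutral_right) auto
      also have "\<dots> \<le> sum (\<lambda>_. 2) B1" using le2 unfolding B1_def by (intro sum_mono) auto
      also have "\<dots> = 2 * card B1" by simp
      finally have "sum l {1..m} \<le> 2 * card B1" .
      then have c2: "card V + 1 \<le> 2 * k" using cV less.prems(2) unfolding B1_def by linarith
      obtain S where S: "S \<subseteq> V" "card S = k" "\<forall>x\<in>S. card {y\<in>S. deg (V - S) x \<le> deg (V - S) y} + deg (V - S) x \<le> k"
      proof (cases "card V + 2 \<le> 2 * k")
        case True
        then show ?thesis using small1[of m l k] le2 big less.prems(2) that unfolding V_def by blast
      next
        case False
        then have "card V + 1 = 2 * k" using c2 by linarith
        then show ?thesis using small2[of k m l] k4 le2 less.prems(2) that unfolding V_def by blast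
      qed
      have "card (V - S) \<le> k" using S finV c2 by (simp add: card_Diff_subset finite_subset)
      then obtain f where f: "valid (V - S) L k f" using base_col[of "V - S" k L] finV kp La by auto
      show ?thesis using extend_valid[of V S k L f] finV S kp La f unfolding V_def by auto
    qed
  qed
qed



theorem theorem2p1:
  fixes m k :: nat and l :: "nat \<Rightarrow> nat"
  assumes "m \<ge> 3"
    and "\<And>i. 1 \<le> i \<Longrightarrow> i \<le> m \<Longrightarrow> l i \<ge> 1"
    and "\<And>i j. 1 \<le> i \<Longrightarrow> i \<le> j \<Longrightarrow> j \<le> m \<Longrightarrow> l i \<le> l j"
    and "k \<ge> m + 1"
  shows "equitably_choosable (spider_verts m l)
           (square_adj (spider_verts m l) (spider_adj m l)) k"
  unfolding equitably_choosable_def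
proof (intro allI impI)
  fix L assume La: "is_k_assignment (spider_verts m l) k L"
  have k4: "4 \<le> k" using assms by simp
  have "{i\<in>{1..m}. 1 \<le> l i} = {1..m}" using assms(2) by auto
  then have legs: "card {i\<in>{1..m}. 1 \<le> l i} < k" using assms(4) by simp
  obtain f where f: "valid (spider_verts m l) L k f"
    using main[OF k4 refl legs] La unfolding is_k_assignment_def by blast
  have "equitable_L_coloring (spider_verts m l) (square_adj (spider_verts m l) (spider_adj m l)) k L f"
    using f link unfolding valid_def equitable_L_coloring_def by blast
  then show "\<exists>f. equitable_L_coloring (spider_verts m l) (square_adj (spider_verts m l) (spider_adj m l)) k L f" by blast
qed

end
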